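(* Let $(M,S)$ be a covered map and $(M^*,\bar S)$ its dual covered map. If the mobile $B=\Psi_2(M,S)$ is $(H',\pi,\alpha')$ with root $i$, then the mobile $\Psi_2(M^*,\bar S)$ is (isomorphic to) the map $(H',\pi^{-1},\alpha')$ with root $o=\alpha'(i)$.
   Context: Permutations compose right to left. A map is $M=(H,\sigma,\alpha)$, $H$ finite, $\alpha$ fixed-point-free involution, $\sigma$ permutation, $\langle\sigma,\alpha\rangle$ transitive, root $r\in H$, up to root-preserving relabelling; $\phi=\sigma\alpha$; dual $M^*=(H,\phi,\alpha)$ with the same root. $\pi_{|S}$ is obtained from the cycles of $\pi$ by erasing elements not in $S$. A covered map is $(M,S)$ with $S$ stable by $\alpha$ and $(S,\sigma_{|S},\alpha_{|S})$ a connecting unicellular map ($\sigma_{|S},\alpha_{|S}$ transitive on $S$, $S$ meets every cycle of $\sigma$ — $S=\emptyset$ allowed if $\sigma$ has one cycle — and $\sigma_{|S}\alpha_{|S}$ cyclic); its dual is $(M^*,H\setminus S)$. The motion function $\theta(h)=\sigma\alpha(h)$ ($h\in S$), $\sigma(h)$ ($h\notin S$) is cyclic and defines the order $r\prec_S\theta(r)\prec_S\cdots$. $\Delta(M,S)=(M,(I,O))$ with $I=\{h\in S:\alpha(h)\prec_S h\}\cup\{h\notin S:h\prec_S\alpha(h)\}$, $O=H\setminus I$. Unfolding of an oriented map $(M,(I,O))$: new elements $i,o\notin H$, $H'=H\cup\{i,o\}$, $I'=I\cup\{i\}$, $O'=O\cup\{o\}$, $\alpha'$ extends $\alpha$ with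 $\alpha'(i)=o$; $\sigma'$ inserts $i$ just before $r$ in the cycle of $\sigma$ containing $r$ and fixes $o$; $\phi'$ inserts $o$ just before $r$ in the cycle of $\phi$ containing $r$ and fixes $i$; $\pi_\circ=\sigma'_{|I'}$, $\pi_\bullet=\phi'_{|O'}$ (extended by the identity), $\pi=\pi_\circ\pi_\bullet^{-1}$. The mobile is $\Lambda_2(M,(I,O))=(H',\pi,\alpha')$ rooted at $i$, and $\Psi_2=\Lambda_2\circ\Delta$. *)

theory Defs
  imports "HOL-Combinatorics.Permutations"
begin

text \<open>Permutations of a carrier H are functions on 'a that permute H
  (identity outside H). Composition is right to left: (f \<circ> g) h = f (g h).\<close>

definition gen_transitive :: "'a set \<Rightarrow> ('a \<Rightarrow> 'a) set \<Rightarrow> bool" where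
  "gen_transitive A F \<longleftrightarrow>
     (\<forall>h\<in>A. \<forall>k\<in>A. (h, k) \<in> {(x, f x) | x f. x \<in> A \<and> f \<in> F}\<^sup>*)"

definition cyclic_on :: "'a set \<Rightarrow> ('a \<Rightarrow> 'a) \<Rightarrow> bool" where
  "cyclic_on A f \<longleftrightarrow> (\<forall>h\<in>A. \<forall>k\<in>A. \<exists>n. (f ^^ n) h = k)"

text \<open>Restriction of a permutation to S: erase elements not in S from the cycles;
  identity outside S.\<close>
definition restr :: "('a \<Rightarrow> 'a) \<Rightarrow> 'a set \<Rightarrow> 'a \<Rightarrow> 'a" where
  "restr p S h = (if h \<in> S then (p ^^ (LEAST k. 0 < k \<and> (p ^^ k) h \<in> S)) h else h)"

definition is_map :: "'a set \<Rightarrow> ('a \<Rightarrow> 'a) \<Rightarrow> ('a \<Rightarrow> 'a) \<Rightarrow> 'a \<Rightarrow> bool" where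
  "is_map H \<sigma> \<alpha> r \<longleftrightarrow> finite H \<and> \<sigma> permutes H \<and> \<alpha> permutes H
     \<and> (\<forall>h\<in>H. \<alpha> h \<noteq> h \<and> \<alpha> (\<alpha> h) = h)
     \<and> gen_transitive H {\<sigma>, \<alpha>} \<and> r \<in> H"

definition connecting_unicellular :: "'a set \<Rightarrow> ('a \<Rightarrow> 'a) \<Rightarrow> ('a \<Rightarrow> 'a) \<Rightarrow> 'a set \<Rightarrow> bool" where
  "connecting_unicellular H \<sigma> \<alpha> S \<longleftrightarrow>
     gen_transitive S {restr \<sigma> S, restr \<alpha> S}
     \<and> ((\<forall>h\<in>H. \<exists>n. (\<sigma> ^^ n) h \<in> S) \<or> (S = {} \<and> cyclic_on H \<sigma>))
     \<and> cyclic_on S (restr \<sigma> S \<circ> restr \<alpha> S)"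

definition covered_map :: "'a set \<Rightarrow> ('a \<Rightarrow> 'a) \<Rightarrow> ('a \<Rightarrow> 'a) \<Rightarrow> 'a \<Rightarrow> 'a set \<Rightarrow> bool" where
  "covered_map H \<sigma> \<alpha> r S \<longleftrightarrow> is_map H \<sigma> \<alpha> r \<and> S \<subseteq> H \<and> (\<forall>h\<in>S. \<alpha> h \<in> S)
     \<and> connecting_unicellular H \<sigma> \<alpha> S"

definition motion :: "('a \<Rightarrow> 'a) \<Rightarrow> ('a \<Rightarrow> 'a) \<Rightarrow> 'a set \<Rightarrow> 'a \<Rightarrow> 'a" where
  "motion \<sigma> \<alpha> S h = (if h \<in> S then \<sigma> (\<alpha> h) else \<sigma> h)"

definition motion_prec :: "('a \<Rightarrow> 'a) \<Rightarrow> ('a \<Rightarrow> 'a) \<Rightarrow> 'a \<Rightarrow> 'a set \<Rightarrow> 'a \<Rightarrow> 'a \<Rightarrow> bool" where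
  "motion_prec \<sigma> \<alpha> r S h k \<longleftrightarrow>
     (LEAST n. (motion \<sigma> \<alpha> S ^^ n) r = h) < (LEAST n. (motion \<sigma> \<alpha> S ^^ n) r = k)"

text \<open>The set I of the orientation \<Delta>(M,S) = (M,(I,O)), O = H - I.\<close>
definition Delta_In :: "'a set \<Rightarrow> ('a \<Rightarrow> 'a) \<Rightarrow> ('a \<Rightarrow> 'a) \<Rightarrow> 'a \<Rightarrow> 'a set \<Rightarrow> 'a set" where
  "Delta_In H \<sigma> \<alpha> r S =
     {h \<in> S. motion_prec \<sigma> \<alpha> r S (\<alpha> h) h} \<union> {h \<in> H - S. motion_prec \<sigma> \<alpha> r S h (\<alpha> h)}"

text \<open>Insert x just before r in the cycle of p containing r; fix y.\<close>
definition insert_before :: "('a \<Rightarrow> 'a) \<Rightarrow> 'a \<Rightarrow> 'a \<Rightarrow> 'a \<Rightarrow> 'a \<Rightarrow> 'a" where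
  "insert_before p r x y h =
     (if h = x then r else if h = y then y else if h = inv p r then x else p h)"

text \<open>Mobile Lambda2 of the oriented map (H,\<sigma>,\<alpha>) rooted at r with orientation (In, H - In),
  unfolded with new elements ii, oo: the rooted map (H', \<pi>, \<alpha>', ii).\<close>
definition Lambda2 :: "'a set \<Rightarrow> ('a \<Rightarrow> 'a) \<Rightarrow> ('a \<Rightarrow> 'a) \<Rightarrow> 'a \<Rightarrow> 'a set \<Rightarrow> 'a \<Rightarrow> 'a
     \<Rightarrow> 'a set \<times> ('a \<Rightarrow> 'a) \<times> ('a \<Rightarrow> 'a) \<times> 'a" where
  "Lambda2 H \<sigma> \<alpha> r In ii oo =
     (let \<sigma>' = insert_before \<sigma> r ii oo;
          \<phi>' = insert_before (\<sigma> \<circ> \<alpha>) r oo ii;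
          \<pi>c = restr \<sigma>' (In \<union> {ii});
          \<pi>b = restr \<phi>' ((H - In) \<union> {oo})
      in (H \<union> {ii, oo}, \<pi>c \<circ> inv \<pi>b, \<alpha>(ii := oo, oo := ii), ii))"

definition Psi2 :: "'a set \<Rightarrow> ('a \<Rightarrow> 'a) \<Rightarrow> ('a \<Rightarrow> 'a) \<Rightarrow> 'a \<Rightarrow> 'a set \<Rightarrow> 'a \<Rightarrow> 'a
     \<Rightarrow> 'a set \<times> ('a \<Rightarrow> 'a) \<times> ('a \<Rightarrow> 'a) \<times> 'a" where
  "Psi2 H \<sigma> \<alpha> r S ii oo = Lambda2 H \<sigma> \<alpha> r (Delta_In H \<sigma> \<alpha> r S) ii oo"

definition rooted_iso :: "'a set \<times> ('a \<Rightarrow> 'a) \<times> ('a \<Rightarrow> 'a) \<times> 'a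
     \<Rightarrow> 'a set \<times> ('a \<Rightarrow> 'a) \<times> ('a \<Rightarrow> 'a) \<times> 'a \<Rightarrow> bool" where
  "rooted_iso M1 M2 = (case M1 of (H1, s1, a1, r1) \<Rightarrow> case M2 of (H2, s2, a2, r2) \<Rightarrow>
     (\<exists>f. bij_betw f H1 H2 \<and> (\<forall>h\<in>H1. f (s1 h) = s2 (f h) \<and> f (a1 h) = a2 (f h))
          \<and> f r1 = r2))"

end

theory Submission
  imports Defs
begin

lemma perm_return:
  assumes "p permutes B" "finite B"
  obtains n where "n > 0" "(p ^^ n) x = x"
proof -
  have "permutation p" using assms permutation_permutes by blast
  then show ?thesis using permutation_self that by metis
qed

lemma restr_facts:
  assumes "p permutes B" "finite B" "a \<in> A"
  defines "m \<equiv> LEAST k. 0 < k \<and> (p ^^ k) a \<in> A"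
  shows "restr p A a = (p ^^ m) a" "0 < m" "(p ^^ m) a \<in> A"
    "\<And>j. 0 < j \<Longrightarrow> j < m \<Longrightarrow> (p ^^ j) a \<notin> A"
proof -
  obtain n where n: "n > 0" "(p ^^ n) a = a" using perm_return[OF assms(1,2)] by blast
  have ex: "0 < n \<and> (p ^^ n) a \<in> A" using n assms(3) by simp
  show "restr p A a = (p ^^ m) a" using assms(3) unfolding restr_def m_def by simp
  show "0 < m" "(p ^^ m) a \<in> A" using LeastI[of "\<lambda>k. 0 < k \<and> (p ^^ k) a \<in> A", OF ex]
    unfolding m_def by auto
  fix j assume "0 < j" "j < m" then show "(p ^^ j) a \<notin> A"
    using not_less_Least[of j "\<lambda>k. 0 < k \<and> (p ^^ k) a \<in> A"] unfolding m_def by auto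
qed

lemma restr_in:
  assumes "p permutes B" "finite B" "a \<in> A"
  shows "restr p A a \<in> A"
  using restr_facts[OF assms] by simp

lemma restr_out: "a \<notin> A \<Longrightarrow> restr p A a = a"
  unfolding restr_def by simp

lemma restr_inj:
  assumes "p permutes B" "finite B"
  shows "inj_on (restr p A) A"
proof (rule inj_onI)
  have injp: "inj (p ^^ k)" for k using permutes_inj[OF assms(1)] by (rule inj_fn)
  have key: "a = b" if ab: "a \<in> A" "b \<in> A" "restr p A a = restr p A b"
     and le: "(LEAST k. 0 < k \<and> (p ^^ k) a \<in> A) \<le> (LEAST k. 0 < k \<and> (p ^^ k) b \<in> A)" for a b
  proof -
    define ma where "ma = (LEAST k. 0 < k \<and> (p ^^ k) a \<in> A)"
    define mb where "mb = (LEAST k. 0 < k \<and> (p ^^ k) b \<in> A)"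
    note fa = restr_facts[OF assms ab(1), folded ma_def]
    note fb = restr_facts[OF assms ab(2), folded mb_def]
    have x: "(p ^^ ma) ((p ^^ (mb - ma)) b) = (p ^^ mb) b" using le
      unfolding ma_def[symmetric] mb_def[symmetric]
      by (metis funpow_add comp_apply le_add_diff_inverse)
    have "(p ^^ ma) a = (p ^^ ma) ((p ^^ (mb - ma)) b)"
      using ab(3) fa(1) fb(1) x by simp
    then have e: "a = (p ^^ (mb - ma)) b" using injp[of ma] by (simp add: inj_eq)
    show "a = b"
    proof (cases "mb - ma = 0")
      case True then show ?thesis using e by simp
    next
      case False
      then have "0 < mb - ma" "mb - ma < mb" using fa(2) by auto
      then show ?thesis using fb(4)[of "mb - ma"] e ab(1) by simp
    qed
  qed
  fix a b assume "a \<in> A" "b \<in> A" "restr p A a = restr p A b"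
  then show "a = b"
  proof (cases "(LEAST k. 0 < k \<and> (p ^^ k) a \<in> A) \<le> (LEAST k. 0 < k \<and> (p ^^ k) b \<in> A)")
    case True then show ?thesis using key[of a b] \<open>a \<in> A\<close> \<open>b \<in> A\<close> \<open>restr p A a = restr p A b\<close> by blast
  next
    case False then show ?thesis using key[of b a] \<open>a \<in> A\<close> \<open>b \<in> A\<close> \<open>restr p A a = restr p A b\<close> by simp
  qed
qed

lemma restr_permutes:
  assumes "p permutes B" "finite B" "A \<subseteq> B"
  shows "restr p A permutes A"
proof (rule bij_imp_permutes)
  have fin: "finite A" using assms finite_subset by blast
  have sub: "restr p A ` A \<subseteq> A" using restr_in[OF assms(1,2)] by blast
  have inj: "inj_on (restr p A) A" by (rule restr_inj[OF assms(1,2)])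
  have "restr p A ` A = A" using endo_inj_surj[OF fin sub inj] .
  then show "bij_betw (restr p A) A A" using inj by (simp add: bij_betw_def)
  show "\<And>x. x \<notin> A \<Longrightarrow> restr p A x = x" by (rule restr_out)
qed

lemma restr_conj:
  assumes inj: "inj_on f B2" and pB: "\<And>h. h \<in> B2 \<Longrightarrow> p h \<in> B2"
    and comm: "\<And>h. h \<in> B2 \<Longrightarrow> f (p h) = q (f h)"
    and A: "A \<subseteq> B2" and h: "h \<in> B2"
  shows "f (restr p A h) = restr q (f ` A) (f h)"
proof -
  have inB: "(p ^^ k) h \<in> B2" for k by (induction k) (auto simp: h pB)
  have c: "f ((p ^^ k) h) = (q ^^ k) (f h)" for k
    by (induction k) (auto simp: comm inB)
  have iff: "x \<in> B2 \<Longrightarrow> (f x \<in> f ` A) = (x \<in> A)" for x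
    using inj A by (auto dest: inj_onD)
  have P: "(0 < k \<and> (q ^^ k) (f h) \<in> f ` A) = (0 < k \<and> (p ^^ k) h \<in> A)" for k
    using iff[OF inB[of k]] c[of k] by simp
  show ?thesis
  proof (cases "h \<in> A")
    case True
    then show ?thesis unfolding restr_def using P c by simp
  next
    case False
    then show ?thesis unfolding restr_def using iff[OF h] by simp
  qed
qed


lemma perm_back:
  assumes "p permutes B" "finite B" "(p ^^ n) h = k"
  shows "\<exists>m. (p ^^ m) k = h"
proof -
  obtain q where q: "q > 0" "(p ^^ q) h = h" using perm_return[OF assms(1,2)] by blast
  have qq: "(p ^^ (q * n)) h = h" for n
    by (induction n) (simp_all add: funpow_add q(2))
  have "n \<le> q * n" using q(1) by simp
  then have "(p ^^ (q * n - n)) k = h"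
    using assms(3) qq[of n] by (metis funpow_add comp_apply le_add_diff_inverse2)
  then show ?thesis by blast
qed

lemma motion_off:
  assumes "\<And>j. j < m \<Longrightarrow> (\<sigma> ^^ j) y \<notin> S"
  shows "(motion \<sigma> \<alpha> S ^^ m) y = (\<sigma> ^^ m) y"
  using assms by (induction m) (auto simp: motion_def)

lemma motion_reach:
  assumes fin: "finite H" and sp: "\<sigma> permutes H" and ap: "\<alpha> permutes H"
    and inv: "\<And>h. h \<in> H \<Longrightarrow> \<alpha> (\<alpha> h) = h" and SH: "S \<subseteq> H"
    and Sa: "\<And>h. h \<in> S \<Longrightarrow> \<alpha> h \<in> S" and r: "r \<in> H"
    and cov: "(\<forall>h\<in>H. \<exists>n. (\<sigma> ^^ n) h \<in> S) \<or> (S = {} \<and> cyclic_on H \<sigma>)"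
    and cyc: "cyclic_on S (restr \<sigma> S \<circ> restr \<alpha> S)"
    and k: "k \<in> H"
  shows "\<exists>n. (motion \<sigma> \<alpha> S ^^ n) r = k"
proof (cases "\<forall>h\<in>H. \<exists>n. (\<sigma> ^^ n) h \<in> S")
  case False
  then have "S = {}" "cyclic_on H \<sigma>" using cov by auto
  moreover have "motion \<sigma> \<alpha> {} = \<sigma>" by (auto simp: motion_def)
  ultimately show ?thesis using r k unfolding cyclic_on_def by auto
next
  case True
  define \<theta> where "\<theta> = motion \<sigma> \<alpha> S"
  define g where "g = (\<lambda>h. if h \<in> S then \<alpha> h else h)"
  have gg: "g (g h) = h" for h using Sa inv SH unfolding g_def by auto
  have gH: "h \<in> H \<Longrightarrow> g h \<in> H" for h using ap SH unfolding g_def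
    by (auto simp: permutes_in_image)
  have "g permutes H"
  proof (rule bij_imp_permutes)
    show "bij_betw g H H"
      by (rule bij_betw_byWitness[where f'=g]) (auto simp: gg gH)
    show "\<And>x. x \<notin> H \<Longrightarrow> g x = x" using SH unfolding g_def by auto
  qed
  then have tp: "\<theta> permutes H"
  proof -
    have "\<theta> = \<sigma> \<circ> g" unfolding \<theta>_def g_def motion_def by auto
    then show ?thesis using permutes_compose[OF \<open>g permutes H\<close> sp] by simp
  qed
  have step: "\<exists>m. (\<theta> ^^ m) s = (restr \<sigma> S \<circ> restr \<alpha> S) s" if s: "s \<in> S" for s
  proof -
    have ra: "restr \<alpha> S s = \<alpha> s"
    proof -
      have "(LEAST k. 0 < k \<and> (\<alpha> ^^ k) s \<in> S) = 1"
        by (rule Least_equality) (auto simp: Sa s)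
      then show ?thesis using s unfolding restr_def by simp
    qed
    define m where "m = (LEAST k. 0 < k \<and> (\<sigma> ^^ k) (\<alpha> s) \<in> S)"
    note f = restr_facts[OF sp fin Sa[OF s], folded m_def]
    have off: "(\<sigma> ^^ j) (\<sigma> (\<alpha> s)) \<notin> S" if "j < m - 1" for j
      using f(4)[of "Suc j"] that f(2) by (simp add: funpow_swap1)
    have "(\<theta> ^^ (m - 1)) (\<theta> s) = (\<sigma> ^^ (m - 1)) (\<sigma> (\<alpha> s))"
      using motion_off[of "m - 1" \<sigma> "\<sigma> (\<alpha> s)" S \<alpha>, OF off] s
      unfolding \<theta>_def by (simp add: motion_def)
    also have "\<dots> = (\<sigma> ^^ m) (\<alpha> s)" using f(2)
      by (metis Suc_diff_1 funpow_Suc_right comp_apply)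
    finally have "(\<theta> ^^ m) s = restr \<sigma> S (\<alpha> s)" using f(1,2)
      by (metis Suc_diff_1 funpow_Suc_right comp_apply)
    then show ?thesis using ra by auto
  qed
  have Sinv: "(restr \<sigma> S \<circ> restr \<alpha> S) s \<in> S" if "s \<in> S" for s
    using restr_in[OF sp fin] restr_in[OF ap fin] that by simp
  have iter: "\<exists>m. (\<theta> ^^ m) s = ((restr \<sigma> S \<circ> restr \<alpha> S) ^^ n) s" if "s \<in> S" for s n
  proof (induction n)
    case 0 show ?case by (rule exI[of _ 0]) simp
  next
    case (Suc n)
    then obtain m where m: "(\<theta> ^^ m) s = ((restr \<sigma> S \<circ> restr \<alpha> S) ^^ n) s" by blast
    have inS: "((restr \<sigma> S \<circ> restr \<alpha> S) ^^ n) s \<in> S"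
      using Sinv[simplified] by (induction n) (auto simp: that)
    obtain m2 where m2: "(\<theta> ^^ m2) (((restr \<sigma> S \<circ> restr \<alpha> S) ^^ n) s)
       = (restr \<sigma> S \<circ> restr \<alpha> S) (((restr \<sigma> S \<circ> restr \<alpha> S) ^^ n) s)"
      using step[OF inS] by blast
    show ?case
      by (rule exI[of _ "m2 + m"]) (metis funpow_add comp_apply funpow.simps(2) m m2)
  qed
  have Sreach: "\<exists>m. (\<theta> ^^ m) s = t" if "s \<in> S" "t \<in> S" for s t
    using cyc that iter unfolding cyclic_on_def by metis
  have toS: "\<exists>n. (\<theta> ^^ n) h \<in> S" if "h \<in> H" for h
  proof -
    have ex: "\<exists>n. (\<sigma> ^^ n) h \<in> S" using True that by blast
    define n where "n = (LEAST n. (\<sigma> ^^ n) h \<in> S)"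
    have "(\<sigma> ^^ n) h \<in> S" using LeastI_ex[OF ex] unfolding n_def .
    moreover have "(\<theta> ^^ n) h = (\<sigma> ^^ n) h" unfolding \<theta>_def
      by (rule motion_off) (use not_less_Least in \<open>auto simp: n_def\<close>)
    ultimately show ?thesis by (intro exI[of _ n]) simp
  qed
  obtain a where a: "(\<theta> ^^ a) r \<in> S" using toS[OF r] by blast
  obtain b where b: "(\<theta> ^^ b) k \<in> S" using toS[OF k] by blast
  obtain b' where b': "(\<theta> ^^ b') ((\<theta> ^^ b) k) = k" using perm_back[OF tp fin refl] by blast
  obtain c where c: "(\<theta> ^^ c) ((\<theta> ^^ a) r) = (\<theta> ^^ b) k" using Sreach[OF a b] by blast
  have "(\<theta> ^^ (b' + c + a)) r = k" using b' c by (simp add: funpow_add)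
  then show ?thesis unfolding \<theta>_def by blast
qed


lemma insert_before_eq:
  assumes "p permutes B" "r \<in> B" "x \<notin> B" "y \<notin> B" "x \<noteq> y"
  shows "insert_before p r x y = p \<circ> Transposition.transpose x (inv p r)"
proof -
  have z: "inv p r \<in> B" using assms(1,2) by (simp add: permutes_in_image permutes_inv)
  have pz: "p (inv p r) = r" using assms(1) by (simp add: permutes_inverses)
  show ?thesis
  proof
    fix h show "insert_before p r x y h = (p \<circ> Transposition.transpose x (inv p r)) h"
      using assms z pz permutes_not_in[OF assms(1)]
      unfolding insert_before_def by (auto simp: transpose_def)
  qed
qed

lemma insert_before_permutes:
  assumes "p permutes B" "r \<in> B" "x \<notin> B" "y \<notin> B" "x \<noteq> y"
  shows "insert_before p r x y permutes (B \<union> {x, y})"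
proof -
  have z: "inv p r \<in> B" using assms(1,2) by (simp add: permutes_in_image permutes_inv)
  have "Transposition.transpose x (inv p r) permutes (B \<union> {x, y})"
    using z by (intro permutes_swap_id) auto
  moreover have "p permutes (B \<union> {x, y})" using assms(1) by (rule permutes_subset) auto
  ultimately show ?thesis unfolding insert_before_eq[OF assms]
    by (rule permutes_compose)
qed

theorem mainTheorem13:
  fixes H :: "'a set" and \<sigma> \<alpha> :: "'a \<Rightarrow> 'a" and r :: 'a and S :: "'a set"
    and ii oo ii2 oo2 :: 'a
  assumes "covered_map H \<sigma> \<alpha> r S"
    and "ii \<notin> H" "oo \<notin> H" "ii \<noteq> oo"
    and "ii2 \<notin> H" "oo2 \<notin> H" "ii2 \<noteq> oo2"
  shows "case Psi2 H \<sigma> \<alpha> r S ii oo of (H', \<pi>, \<alpha>', i) \<Rightarrow>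
           rooted_iso (Psi2 H (\<sigma> \<circ> \<alpha>) \<alpha> r (H - S) ii2 oo2) (H', inv \<pi>, \<alpha>', \<alpha>' i)"
proof -
  note cm = assms(1)[unfolded covered_map_def is_map_def connecting_unicellular_def]
  have fin: "finite H" and sp: "\<sigma> permutes H" and ap: "\<alpha> permutes H"
    and afix: "\<And>h. h \<in> H \<Longrightarrow> \<alpha> h \<noteq> h" and ainv: "\<And>h. h \<in> H \<Longrightarrow> \<alpha> (\<alpha> h) = h"
    and r: "r \<in> H" and SH: "S \<subseteq> H" and Sa: "\<And>h. h \<in> S \<Longrightarrow> \<alpha> h \<in> S"
    and cov: "(\<forall>h\<in>H. \<exists>n. (\<sigma> ^^ n) h \<in> S) \<or> (S = {} \<and> cyclic_on H \<sigma>)"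
    and cyc: "cyclic_on S (restr \<sigma> S \<circ> restr \<alpha> S)"
    using cm by auto
  have aa: "\<alpha> (\<alpha> h) = h" for h
    using ainv permutes_not_in[OF ap] by (cases "h \<in> H") auto
  have saa: "\<sigma> \<circ> \<alpha> \<circ> \<alpha> = \<sigma>" by (auto simp: aa)
  have mot: "motion (\<sigma> \<circ> \<alpha>) \<alpha> (H - S) = motion \<sigma> \<alpha> S"
    using SH permutes_not_in[OF ap] by (intro ext) (auto simp: motion_def aa)
  define \<theta> where "\<theta> = motion \<sigma> \<alpha> S"
  define L where "L = (\<lambda>x. LEAST n. (\<theta> ^^ n) r = x)"
  have Lx: "(\<theta> ^^ L x) r = x" if "x \<in> H" for x
    using motion_reach[OF fin sp ap ainv SH Sa r cov cyc that] unfolding L_def \<theta>_def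
    by (rule LeastI_ex)
  have Lne: "L h \<noteq> L (\<alpha> h)" if "h \<in> H" for h
    using Lx[OF that] Lx[of "\<alpha> h"] afix[OF that] that ap
    by (metis permutes_in_image)
  define I where "I = Delta_In H \<sigma> \<alpha> r S"
  have IH: "I \<subseteq> H" unfolding I_def Delta_In_def using SH by auto
  have I2: "Delta_In H (\<sigma> \<circ> \<alpha>) \<alpha> r (H - S) = H - I"
    unfolding I_def Delta_In_def motion_prec_def mot \<theta>_def[symmetric]
    using SH Lne[unfolded L_def linorder_neq_iff] by auto
  have HI: "H - (H - I) = I" using IH by auto
  have sap: "\<sigma> \<circ> \<alpha> permutes H" by (rule permutes_compose[OF ap sp])
  define B where "B = H \<union> {ii, oo}"
  define B2 where "B2 = H \<union> {ii2, oo2}"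
  define s1 where "s1 = insert_before \<sigma> r ii oo"
  define p1 where "p1 = insert_before (\<sigma> \<circ> \<alpha>) r oo ii"
  define s2 where "s2 = insert_before (\<sigma> \<circ> \<alpha>) r ii2 oo2"
  define p2 where "p2 = insert_before \<sigma> r oo2 ii2"
  have s1p: "s1 permutes B" unfolding s1_def B_def
    by (rule insert_before_permutes[OF sp r assms(2,3,4)])
  have p1p: "p1 permutes B" unfolding p1_def B_def
    using insert_before_permutes[OF sap r assms(3,2) assms(4)[symmetric]] by (simp add: insert_commute)
  have s2p: "s2 permutes B2" unfolding s2_def B2_def
    by (rule insert_before_permutes[OF sap r assms(5,6,7)])
  have p2p: "p2 permutes B2" unfolding p2_def B2_def
    using insert_before_permutes[OF sp r assms(6,5) assms(7)[symmetric]] by (simp add: insert_commute)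
  have finB: "finite B" "finite B2" using fin unfolding B_def B2_def by auto
  define \<pi>c where "\<pi>c = restr s1 (I \<union> {ii})"
  define \<pi>b where "\<pi>b = restr p1 ((H - I) \<union> {oo})"
  define \<pi>c2 where "\<pi>c2 = restr s2 ((H - I) \<union> {ii2})"
  define \<pi>b2 where "\<pi>b2 = restr p2 (I \<union> {oo2})"
  have \<pi>cp: "\<pi>c permutes B" unfolding \<pi>c_def
    by (rule permutes_subset[OF restr_permutes[OF s1p finB(1)]]) (use IH in \<open>auto simp: B_def\<close>)
  have \<pi>bp: "\<pi>b permutes B" unfolding \<pi>b_def
    by (rule permutes_subset[OF restr_permutes[OF p1p finB(1)]]) (auto simp: B_def)
  have \<pi>c2p: "\<pi>c2 permutes B2" unfolding \<pi>c2_def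
    by (rule permutes_subset[OF restr_permutes[OF s2p finB(2)]]) (auto simp: B2_def)
  have \<pi>b2p: "\<pi>b2 permutes B2" unfolding \<pi>b2_def
    by (rule permutes_subset[OF restr_permutes[OF p2p finB(2)]]) (use IH in \<open>auto simp: B2_def\<close>)
  define f where "f = (\<lambda>h. if h = ii2 then oo else if h = oo2 then ii else h)"
  have finj: "inj_on f B2" unfolding inj_on_def f_def B2_def using assms(2-7) by auto
  have fimg: "f ` B2 = B" unfolding f_def B2_def B_def using assms(2-7) by auto
  have zsa: "inv (\<sigma> \<circ> \<alpha>) r \<in> H" "inv \<sigma> r \<in> H"
    using sap sp r by (simp_all add: permutes_in_image permutes_inv)
  have fH: "h \<in> H \<Longrightarrow> f h = h" for h unfolding f_def using assms(5,6) by auto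
  have fii2: "f ii2 = oo" and foo2: "f oo2 = ii" using assms(7) by (simp_all add: f_def)
  have C1: "f (s2 h) = p1 (f h)" if hB: "h \<in> B2" for h
  proof -
    consider "h = ii2" | "h = oo2" | "h \<in> H" using hB unfolding B2_def by blast
    then show ?thesis
    proof cases
      case 1 then show ?thesis using fH[OF r] fii2 unfolding s2_def p1_def insert_before_def by simp
    next
      case 2 then show ?thesis using foo2 assms(4,7) unfolding s2_def p1_def insert_before_def by simp
    next
      case 3
      have ne: "h \<noteq> ii2" "h \<noteq> oo2" "h \<noteq> ii" "h \<noteq> oo" using 3 assms(2,3,5,6) by auto
      have "(\<sigma> \<circ> \<alpha>) h \<in> H" using 3 permutes_in_image[OF sap] by blast
      then show ?thesis using fH[OF 3] fH ne fii2
        unfolding s2_def p1_def insert_before_def by simp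
    qed
  qed
  have C2: "f (p2 h) = s1 (f h)" if hB: "h \<in> B2" for h
  proof -
    consider "h = ii2" | "h = oo2" | "h \<in> H" using hB unfolding B2_def by blast
    then show ?thesis
    proof cases
      case 1 then show ?thesis using fii2 assms(4,7) unfolding p2_def s1_def insert_before_def by simp
    next
      case 2 then show ?thesis using fH[OF r] foo2 assms(7) unfolding p2_def s1_def insert_before_def by simp
    next
      case 3
      have ne: "h \<noteq> ii2" "h \<noteq> oo2" "h \<noteq> ii" "h \<noteq> oo" using 3 assms(2,3,5,6) by auto
      have "\<sigma> h \<in> H" using 3 sp by (simp add: permutes_in_image)
      then show ?thesis using fH[OF 3] fH ne foo2
        unfolding p2_def s1_def insert_before_def by simp
    qed
  qed
  have s2B: "h \<in> B2 \<Longrightarrow> s2 h \<in> B2" for h using s2p by (simp add: permutes_in_image)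
  have p2B: "h \<in> B2 \<Longrightarrow> p2 h \<in> B2" for h using p2p by (simp add: permutes_in_image)
  have fI: "f ` I = I"
  proof -
    have "f ` I = (\<lambda>x. x) ` I" by (rule image_cong) (use IH fH in auto)
    then show ?thesis by simp
  qed
  have fHI: "f ` (H - I) = H - I"
  proof -
    have "f ` (H - I) = (\<lambda>x. x) ` (H - I)" by (rule image_cong) (use fH in auto)
    then show ?thesis by simp
  qed
  have im1: "f ` ((H - I) \<union> {ii2}) = (H - I) \<union> {oo}" by (simp add: image_Un fHI fii2)
  have im2: "f ` (I \<union> {oo2}) = I \<union> {ii}" by (simp add: image_Un fI foo2)
  have D1: "f (\<pi>c2 h) = \<pi>b (f h)" if "h \<in> B2" for h
    using restr_conj[of f B2 s2 p1 "(H - I) \<union> {ii2}" h, OF finj s2B C1] that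
    unfolding \<pi>c2_def \<pi>b_def im1 B2_def by auto
  have D2: "f (\<pi>b2 h) = \<pi>c (f h)" if "h \<in> B2" for h
    using restr_conj[of f B2 p2 s1 "I \<union> {oo2}" h, OF finj p2B C2] that IH
    unfolding \<pi>b2_def \<pi>c_def im2 B2_def by auto
  have invpi: "inv (\<pi>c \<circ> inv \<pi>b) = \<pi>b \<circ> inv \<pi>c"
    using permutes_bij[OF \<pi>cp] permutes_bij[OF \<pi>bp]
    by (simp add: o_inv_distrib bij_imp_bij_inv inv_inv_eq)
  have E: "f ((\<pi>c2 \<circ> inv \<pi>b2) h) = inv (\<pi>c \<circ> inv \<pi>b) (f h)" if h: "h \<in> B2" for h
  proof -
    have k: "inv \<pi>b2 h \<in> B2" using h \<pi>b2p by (simp add: permutes_in_image permutes_inv)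
    have "\<pi>c (f (inv \<pi>b2 h)) = f h" using D2[OF k] \<pi>b2p by (simp add: permutes_inverses)
    then have "f (inv \<pi>b2 h) = inv \<pi>c (f h)" using \<pi>cp by (metis permutes_inverses(2))
    then show ?thesis using D1[OF k] invpi by simp
  qed
  have A: "f ((\<alpha>(ii2 := oo2, oo2 := ii2)) h) = (\<alpha>(ii := oo, oo := ii)) (f h)" if "h \<in> B2" for h
  proof -
    have "h \<in> H \<Longrightarrow> \<alpha> h \<in> H" using ap by (simp add: permutes_in_image)
    then show ?thesis using that assms(2-7) fH unfolding B2_def f_def by auto
  qed
  have bij: "bij_betw f B2 B" using finj fimg by (simp add: bij_betw_def)
  have goal: "rooted_iso (B2, \<pi>c2 \<circ> inv \<pi>b2, \<alpha>(ii2 := oo2, oo2 := ii2), ii2)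
      (B, inv (\<pi>c \<circ> inv \<pi>b), \<alpha>(ii := oo, oo := ii), (\<alpha>(ii := oo, oo := ii)) ii)"
    unfolding rooted_iso_def prod.case
  proof (intro exI[of _ f] conjI ballI)
    show "bij_betw f B2 B" by (rule bij)
    show "f ii2 = (\<alpha>(ii := oo, oo := ii)) ii" using fii2 assms(4) by simp
  next
    fix h assume "h \<in> B2"
    then show "f ((\<pi>c2 \<circ> inv \<pi>b2) h) = inv (\<pi>c \<circ> inv \<pi>b) (f h)" by (rule E)
  next
    fix h assume "h \<in> B2"
    then show "f ((\<alpha>(ii2 := oo2, oo2 := ii2)) h) = (\<alpha>(ii := oo, oo := ii)) (f h)" by (rule A)
  qed
  show ?thesis
    unfolding Psi2_def Lambda2_def Let_def I2 HI saa
    unfolding I_def[symmetric] s1_def[symmetric] p1_def[symmetric] s2_def[symmetric]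
      p2_def[symmetric] \<pi>c_def[symmetric] \<pi>b_def[symmetric] \<pi>c2_def[symmetric] \<pi>b2_def[symmetric]
      B_def[symmetric] B2_def[symmetric]
    using goal by (simp only: prod.case)
qed

end
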